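(* Let $G=K\rtimes_\phi H$ be a finite Frobenius group with kernel $K$ and complement $H$, where $\phi:H\to\mathrm{Aut}(K)$ is the action, $H$ is identified with a subgroup of $G$, and $\pi:G\to H$ is the quotient map with kernel $K$. Let $\sigma\in\mathrm{Aut}(K)$ and $\gamma\in\mathrm{Aut}(H)$. Then there exists $\alpha\in\mathrm{Aut}(G)$ with $\alpha|_K=\sigma$ and $\pi\circ\alpha|_H=\gamma$ if and only if for every $h\in H$ the automorphism $\sigma\circ\phi(h)\circ\sigma^{-1}\circ\phi(\gamma(h))^{-1}$ of $K$ lies in $\mathrm{Inn}(K)$.
   Context: A finite group $G=K\rtimes_\phi H$ with $K,H$ nontrivial is a Frobenius group with kernel $K$ and complement $H$ if for every $h\in H$, $h\neq1$, the automorphism $\phi(h)$ fixes no nonidentity element of $K$. $\mathrm{Inn}(K)$ denotes the group of inner automorphisms of $K$. *)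

theory Defs
  imports "HOL-Algebra.Algebra"
begin

definition semidirect_prod ::
  "('a, 'c) monoid_scheme \<Rightarrow> ('b, 'd) monoid_scheme \<Rightarrow> ('b \<Rightarrow> 'a \<Rightarrow> 'a) \<Rightarrow> ('a \<times> 'b) monoid"
  where "semidirect_prod K H phi =
    \<lparr>carrier = carrier K \<times> carrier H,
     monoid.mult = (\<lambda>(k1, h1) (k2, h2). (k1 \<otimes>\<^bsub>K\<^esub> phi h1 k2, h1 \<otimes>\<^bsub>H\<^esub> h2)),
     one = (\<one>\<^bsub>K\<^esub>, \<one>\<^bsub>H\<^esub>)\<rparr>"

text \<open>phi is an action of H on K by automorphisms making K \<rtimes>_phi H a finite
  Frobenius group with kernel K and complement H (both nontrivial).\<close>
definition frobenius_action ::
  "('a, 'c) monoid_scheme \<Rightarrow> ('b, 'd) monoid_scheme \<Rightarrow> ('b \<Rightarrow> 'a \<Rightarrow> 'a) \<Rightarrow> bool"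
  where "frobenius_action K H phi \<longleftrightarrow>
    group K \<and> group H \<and> finite (carrier K) \<and> finite (carrier H) \<and>
    carrier K \<noteq> {\<one>\<^bsub>K\<^esub>} \<and> carrier H \<noteq> {\<one>\<^bsub>H\<^esub>} \<and>
    phi \<in> hom H (AutoGroup K) \<and>
    (\<forall>h \<in> carrier H. h \<noteq> \<one>\<^bsub>H\<^esub> \<longrightarrow>
       (\<forall>k \<in> carrier K. phi h k = k \<longrightarrow> k = \<one>\<^bsub>K\<^esub>))"

definition Inn :: "('a, 'c) monoid_scheme \<Rightarrow> ('a \<Rightarrow> 'a) set"
  where "Inn K = {(\<lambda>x \<in> carrier K. g \<otimes>\<^bsub>K\<^esub> x \<otimes>\<^bsub>K\<^esub> inv\<^bsub>K\<^esub> g) | g. g \<in> carrier K}"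

end

theory Submission
  imports Defs
begin


lemma sdp_carrier[simp]: "carrier (semidirect_prod K H phi) = carrier K \<times> carrier H"
  by (simp add: semidirect_prod_def)
lemma sdp_mult[simp]: "(k1,h1) \<otimes>\<^bsub>semidirect_prod K H phi\<^esub> (k2,h2) = (k1 \<otimes>\<^bsub>K\<^esub> phi h1 k2, h1 \<otimes>\<^bsub>H\<^esub> h2)"
  by (simp add: semidirect_prod_def)

lemma (in group) my_cancel1[simp]: "x \<in> carrier G \<Longrightarrow> y \<in> carrier G \<Longrightarrow> inv x \<otimes> (x \<otimes> y) = y"
  by (simp add: m_assoc[symmetric])
lemma (in group) my_cancel2[simp]: "x \<in> carrier G \<Longrightarrow> y \<in> carrier G \<Longrightarrow> x \<otimes> (inv x \<otimes> y) = y"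
  by (simp add: m_assoc[symmetric])

locale frob =
  fixes K (structure) and H :: "('b,'d) monoid_scheme" and phi :: "'b \<Rightarrow> 'a \<Rightarrow> 'a"
    and \<sigma> :: "'a \<Rightarrow> 'a" and \<gamma> :: "'b \<Rightarrow> 'b"
  assumes fa: "frobenius_action K H phi" and sig: "\<sigma> \<in> iso K K" and gam: "\<gamma> \<in> iso H H"

sublocale frob \<subseteq> group K using fa by (simp add: frobenius_action_def)
sublocale frob \<subseteq> H: group H using fa by (simp add: frobenius_action_def)

context frob begin

lemma finK: "finite (carrier K)" and finH: "finite (carrier H)"
  using fa by (auto simp: frobenius_action_def)

lemma phi_hom: "phi \<in> hom H (AutoGroup K)" using fa by (simp add: frobenius_action_def)

lemma phi_auto: "h \<in> carrier H \<Longrightarrow> phi h \<in> auto K"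
  using phi_hom by (auto simp: hom_def AutoGroup_def)

lemma phi_mult: "h \<in> carrier H \<Longrightarrow> x \<in> carrier K \<Longrightarrow> y \<in> carrier K \<Longrightarrow> phi h (x \<otimes> y) = phi h x \<otimes> phi h y"
  using phi_auto by (auto simp: auto_def hom_def)

lemma phi_bij: "h \<in> carrier H \<Longrightarrow> bij_betw (phi h) (carrier K) (carrier K)"
  using phi_auto unfolding auto_def Bij_def by blast

lemma phi_closed[simp]: "h \<in> carrier H \<Longrightarrow> x \<in> carrier K \<Longrightarrow> phi h x \<in> carrier K"
  using bij_betw_apply[OF phi_bij] by blast

lemma phi_inj: "h \<in> carrier H \<Longrightarrow> x \<in> carrier K \<Longrightarrow> y \<in> carrier K \<Longrightarrow> phi h x = phi h y \<Longrightarrow> x = y"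
  using bij_betw_imp_inj_on[OF phi_bij] inj_onD by metis

lemma phi_comp: "a \<in> carrier H \<Longrightarrow> b \<in> carrier H \<Longrightarrow> x \<in> carrier K \<Longrightarrow> phi (a \<otimes>\<^bsub>H\<^esub> b) x = phi a (phi b x)"
proof -
  assume a: "a \<in> carrier H" and b: "b \<in> carrier H" and x: "x \<in> carrier K"
  have "phi (a \<otimes>\<^bsub>H\<^esub> b) = phi a \<otimes>\<^bsub>AutoGroup K\<^esub> phi b"
    using phi_hom a b by (simp add: hom_def)
  also have "\<dots> = compose (carrier K) (phi a) (phi b)"
    using phi_auto[OF a] phi_auto[OF b] by (simp add: AutoGroup_def BijGroup_def auto_def)
  finally show ?thesis using x by (simp add: compose_def)
qed

lemma phi_one_K[simp]: "h \<in> carrier H \<Longrightarrow> phi h \<one> = \<one>"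
proof -
  assume h: "h \<in> carrier H"
  have "phi h \<one> \<otimes> phi h \<one> = phi h \<one> \<otimes> \<one>" using phi_mult[OF h, of \<one> \<one>] h by simp
  thus ?thesis using h l_cancel[of "phi h \<one>" "phi h \<one>" "\<one>"] by simp
qed

lemma phi_one_H[simp]: "x \<in> carrier K \<Longrightarrow> phi \<one>\<^bsub>H\<^esub> x = x"
proof -
  assume x: "x \<in> carrier K"
  have "phi \<one>\<^bsub>H\<^esub> (phi \<one>\<^bsub>H\<^esub> x) = phi \<one>\<^bsub>H\<^esub> x" using phi_comp[of "\<one>\<^bsub>H\<^esub>" "\<one>\<^bsub>H\<^esub>" x] x by simp
  thus ?thesis using phi_inj[of "\<one>\<^bsub>H\<^esub>" "phi \<one>\<^bsub>H\<^esub> x" x] x by simp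
qed

lemma phi_inv: "h \<in> carrier H \<Longrightarrow> x \<in> carrier K \<Longrightarrow> phi h (inv x) = inv (phi h x)"
proof -
  assume h: "h \<in> carrier H" and x: "x \<in> carrier K"
  have "phi h (inv x) \<otimes> phi h x = \<one>" using phi_mult[OF h, of "inv x" x] h x by simp
  thus ?thesis using h x by (simp add: inv_equality)
qed

lemma frob_fix: "h \<in> carrier H \<Longrightarrow> x \<in> carrier K \<Longrightarrow> phi h x = x \<Longrightarrow> x \<noteq> \<one> \<Longrightarrow> h = \<one>\<^bsub>H\<^esub>"
  using fa by (auto simp: frobenius_action_def)

lemma sig_hom: "x \<in> carrier K \<Longrightarrow> y \<in> carrier K \<Longrightarrow> \<sigma> (x \<otimes> y) = \<sigma> x \<otimes> \<sigma> y"
  using sig by (auto simp: iso_def hom_def)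
lemma sig_bij: "bij_betw \<sigma> (carrier K) (carrier K)" using sig by (auto simp: iso_def)
lemma sig_closed[simp]: "x \<in> carrier K \<Longrightarrow> \<sigma> x \<in> carrier K"
  using bij_betw_apply[OF sig_bij] by blast
lemma sig_inj: "x \<in> carrier K \<Longrightarrow> y \<in> carrier K \<Longrightarrow> \<sigma> x = \<sigma> y \<Longrightarrow> x = y"
  using bij_betw_imp_inj_on[OF sig_bij] inj_onD by metis
lemma gam_hom: "x \<in> carrier H \<Longrightarrow> y \<in> carrier H \<Longrightarrow> \<gamma> (x \<otimes>\<^bsub>H\<^esub> y) = \<gamma> x \<otimes>\<^bsub>H\<^esub> \<gamma> y"
  using gam by (auto simp: iso_def hom_def)
lemma gam_bij: "bij_betw \<gamma> (carrier H) (carrier H)" using gam by (auto simp: iso_def)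
lemma gam_closed[simp]: "x \<in> carrier H \<Longrightarrow> \<gamma> x \<in> carrier H"
  using bij_betw_apply[OF gam_bij] by blast
lemma gam_inj: "x \<in> carrier H \<Longrightarrow> y \<in> carrier H \<Longrightarrow> \<gamma> x = \<gamma> y \<Longrightarrow> x = y"
  using bij_betw_imp_inj_on[OF gam_bij] inj_onD by metis
lemma gam_one[simp]: "\<gamma> \<one>\<^bsub>H\<^esub> = \<one>\<^bsub>H\<^esub>"
proof -
  have "\<gamma> \<one>\<^bsub>H\<^esub> \<otimes>\<^bsub>H\<^esub> \<gamma> \<one>\<^bsub>H\<^esub> = \<gamma> \<one>\<^bsub>H\<^esub> \<otimes>\<^bsub>H\<^esub> \<one>\<^bsub>H\<^esub>"
    using gam_hom[of "\<one>\<^bsub>H\<^esub>" "\<one>\<^bsub>H\<^esub>"] by simp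
  thus ?thesis using H.l_cancel[of "\<gamma> \<one>\<^bsub>H\<^esub>" "\<gamma> \<one>\<^bsub>H\<^esub>" "\<one>\<^bsub>H\<^esub>"] by simp
qed

lemma card_dvd: "card (carrier H) dvd card (carrier K) - 1"
proof -
  define A where "A = carrier K - {\<one>}"
  define r where "r = {(x,y). x \<in> A \<and> y \<in> A \<and> (\<exists>h\<in>carrier H. y = phi h x)}"
  have inA: "phi h x \<in> A" if "h \<in> carrier H" "x \<in> A" for h x
    using that phi_inj[of h x \<one>] by (auto simp: A_def)
  have eq: "equiv A r"
  proof (rule equivI)
    show "refl_on A r" unfolding refl_on_def r_def
      by (auto intro!: bexI[of _ "\<one>\<^bsub>H\<^esub>"] simp: A_def)
    show "sym r" unfolding sym_def r_def
    proof (clarify)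
      fix x h assume x: "x \<in> A" and h: "h \<in> carrier H" and "phi h x \<in> A"
      have "x = phi (inv\<^bsub>H\<^esub> h) (phi h x)"
        using phi_comp[of "inv\<^bsub>H\<^esub> h" h x] x h by (simp add: A_def)
      thus "\<exists>g\<in>carrier H. x = phi g (phi h x)" using h by blast
    qed
    show "trans r" unfolding trans_def r_def
    proof (clarify)
      fix x h g assume x: "x \<in> A" and h: "h \<in> carrier H" and g: "g \<in> carrier H"
      have "phi g (phi h x) = phi (g \<otimes>\<^bsub>H\<^esub> h) x" using phi_comp[of g h x] x h g by (simp add: A_def)
      thus "\<exists>k\<in>carrier H. phi g (phi h x) = phi k x" using h g by blast
    qed
  qed (auto simp: r_def)
  have "card (carrier H) dvd card A"
  proof (rule equiv_imp_dvd_card[OF _ eq])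
    show "finite A" using finK by (simp add: A_def)
    fix Cl assume "Cl \<in> A // r"
    then obtain x where x: "x \<in> A" and Cl: "Cl = r `` {x}" by (auto simp: quotient_def)
    have "Cl = (\<lambda>h. phi h x) ` carrier H" using x inA by (auto simp: Cl r_def)
    moreover have "inj_on (\<lambda>h. phi h x) (carrier H)"
    proof (rule inj_onI)
      fix a b assume a: "a \<in> carrier H" and b: "b \<in> carrier H" and e: "phi a x = phi b x"
      have xK: "x \<in> carrier K" "x \<noteq> \<one>" using x by (auto simp: A_def)
      have "phi (inv\<^bsub>H\<^esub> b \<otimes>\<^bsub>H\<^esub> a) x = phi (inv\<^bsub>H\<^esub> b) (phi b x)"
        using phi_comp a b xK e by simp
      also have "\<dots> = phi (inv\<^bsub>H\<^esub> b \<otimes>\<^bsub>H\<^esub> b) x" using phi_comp[of "inv\<^bsub>H\<^esub> b" b x] b xK by simp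
      also have "\<dots> = x" using b xK by (simp del: phi_one_H) (simp)
      finally have "phi (inv\<^bsub>H\<^esub> b \<otimes>\<^bsub>H\<^esub> a) x = x" .
      hence "inv\<^bsub>H\<^esub> b \<otimes>\<^bsub>H\<^esub> a = \<one>\<^bsub>H\<^esub>" using frob_fix xK a b by simp
      thus "a = b" using a b by (metis H.inv_equality H.inv_inv H.inv_closed)
    qed
    ultimately show "card (carrier H) dvd card Cl" by (simp add: card_image)
  qed
  moreover have "card A = card (carrier K) - 1" using finK by (simp add: A_def)
  ultimately show ?thesis by simp
qed

end


context frob begin

abbreviation "psi h \<equiv> phi (\<gamma> h)"
abbreviation "G \<equiv> semidirect_prod K H phi"
definition "Tf h = (\<lambda>k \<in> carrier K. \<sigma> (phi h (inv_into (carrier K) \<sigma>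
                 (inv_into (carrier K) (phi (\<gamma> h)) k))))"

lemma sinv_closed: "x \<in> carrier K \<Longrightarrow> inv_into (carrier K) \<sigma> x \<in> carrier K"
  using sig_bij bij_betw_inv_into bij_betw_apply by metis
lemma sinv_r: "x \<in> carrier K \<Longrightarrow> \<sigma> (inv_into (carrier K) \<sigma> x) = x"
  using sig_bij bij_betw_inv_into_right by metis
lemma sinv_l: "x \<in> carrier K \<Longrightarrow> inv_into (carrier K) \<sigma> (\<sigma> x) = x"
  using sig_bij bij_betw_inv_into_left by metis
lemma pinv_closed: "h \<in> carrier H \<Longrightarrow> x \<in> carrier K \<Longrightarrow> inv_into (carrier K) (phi h) x \<in> carrier K"
  using phi_bij bij_betw_inv_into bij_betw_apply by metis
lemma pinv_r: "h \<in> carrier H \<Longrightarrow> x \<in> carrier K \<Longrightarrow> phi h (inv_into (carrier K) (phi h) x) = x"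
  using phi_bij bij_betw_inv_into_right by metis
lemma pinv_l: "h \<in> carrier H \<Longrightarrow> x \<in> carrier K \<Longrightarrow> inv_into (carrier K) (phi h) (phi h x) = x"
  using phi_bij bij_betw_inv_into_left by metis

lemma Tf_conj: "h \<in> carrier H \<Longrightarrow> c \<in> carrier K \<Longrightarrow>
   (\<forall>k \<in> carrier K. \<sigma> (phi h k) = c \<otimes> psi h (\<sigma> k) \<otimes> inv c) \<Longrightarrow> Tf h \<in> Inn K"
proof -
  assume h: "h \<in> carrier H" and c: "c \<in> carrier K" and E: "\<forall>k \<in> carrier K. \<sigma> (phi h k) = c \<otimes> psi h (\<sigma> k) \<otimes> inv c"
  have "Tf h = (\<lambda>x \<in> carrier K. c \<otimes> x \<otimes> inv c)"
  proof (rule ext)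
    fix x show "Tf h x = (\<lambda>x \<in> carrier K. c \<otimes> x \<otimes> inv c) x"
    proof (cases "x \<in> carrier K")
      case True
      define y where "y = inv_into (carrier K) \<sigma> (inv_into (carrier K) (psi h) x)"
      have y: "y \<in> carrier K" using True h by (simp add: y_def sinv_closed pinv_closed)
      have "psi h (\<sigma> y) = x" using True h by (simp add: y_def sinv_r pinv_closed pinv_r)
      thus ?thesis using E y True by (simp add: Tf_def y_def)
    qed (simp add: Tf_def)
  qed
  thus ?thesis using c by (auto simp: Inn_def)
qed

lemma forward:
  assumes hom: "\<alpha> \<in> hom G G" and a1: "\<forall>k \<in> carrier K. \<alpha> (k, \<one>\<^bsub>H\<^esub>) = (\<sigma> k, \<one>\<^bsub>H\<^esub>)"
    and a2: "\<forall>h \<in> carrier H. snd (\<alpha> (\<one>, h)) = \<gamma> h" and h: "h \<in> carrier H"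
  shows "Tf h \<in> Inn K"
proof -
  define c where "c = fst (\<alpha> (\<one>, h))"
  have ah: "\<alpha> (\<one>, h) \<in> carrier K \<times> carrier H" using hom h by (auto simp: hom_def)
  have ac: "\<alpha> (\<one>, h) = (c, \<gamma> h)" using a2 h by (simp add: c_def prod_eq_iff)
  have c: "c \<in> carrier K" using ah by (auto simp: c_def)
  show ?thesis
  proof (rule Tf_conj[OF h c], intro ballI)
    fix k assume k: "k \<in> carrier K"
    have m: "\<alpha> (x \<otimes>\<^bsub>G\<^esub> y) = \<alpha> x \<otimes>\<^bsub>G\<^esub> \<alpha> y" if "x \<in> carrier G" "y \<in> carrier G" for x y
      using hom_mult[OF hom that] .
    have e1: "\<alpha> ((\<one>, h) \<otimes>\<^bsub>G\<^esub> (k, \<one>\<^bsub>H\<^esub>)) = \<alpha> (\<one>, h) \<otimes>\<^bsub>G\<^esub> \<alpha> (k, \<one>\<^bsub>H\<^esub>)"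
      by (rule m) (use h k in auto)
    have e2: "\<alpha> ((phi h k, \<one>\<^bsub>H\<^esub>) \<otimes>\<^bsub>G\<^esub> (\<one>, h)) = \<alpha> (phi h k, \<one>\<^bsub>H\<^esub>) \<otimes>\<^bsub>G\<^esub> \<alpha> (\<one>, h)"
      by (rule m) (use h k in auto)
    have e3: "(\<one>, h) \<otimes>\<^bsub>G\<^esub> (k, \<one>\<^bsub>H\<^esub>) = (phi h k, \<one>\<^bsub>H\<^esub>) \<otimes>\<^bsub>G\<^esub> (\<one>, h)"
      using h k by simp
    have "\<alpha> (\<one>, h) \<otimes>\<^bsub>G\<^esub> \<alpha> (k, \<one>\<^bsub>H\<^esub>) = \<alpha> (phi h k, \<one>\<^bsub>H\<^esub>) \<otimes>\<^bsub>G\<^esub> \<alpha> (\<one>, h)"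
      using e1 e2 e3 by simp
    hence "c \<otimes> psi h (\<sigma> k) = \<sigma> (phi h k) \<otimes> c"
      using ac a1 h k c by simp
    hence "c \<otimes> psi h (\<sigma> k) \<otimes> inv c = \<sigma> (phi h k) \<otimes> c \<otimes> inv c" by simp
    thus "\<sigma> (phi h k) = c \<otimes> psi h (\<sigma> k) \<otimes> inv c" using h k c by (simp add: m_assoc)
  qed
qed

end


context frob begin

lemma Inn_E: assumes h: "h \<in> carrier H" and T: "Tf h \<in> Inn K"
  shows "\<exists>g\<in>carrier K. \<forall>k\<in>carrier K. \<sigma> (phi h k) = g \<otimes> psi h (\<sigma> k) \<otimes> inv g"
proof -
  obtain g where g: "g \<in> carrier K" and Tg: "Tf h = (\<lambda>x \<in> carrier K. g \<otimes> x \<otimes> inv g)"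
    using T by (auto simp: Inn_def)
  have "\<sigma> (phi h k) = g \<otimes> psi h (\<sigma> k) \<otimes> inv g" if k: "k \<in> carrier K" for k
  proof -
    have "Tf h (psi h (\<sigma> k)) = g \<otimes> psi h (\<sigma> k) \<otimes> inv g" using Tg h k by simp
    moreover have "Tf h (psi h (\<sigma> k)) = \<sigma> (phi h k)" using h k by (simp add: Tf_def pinv_l sinv_l)
    ultimately show ?thesis by simp
  qed
  thus ?thesis using g by blast
qed

definition "Z = {z \<in> carrier K. \<forall>x\<in>carrier K. z \<otimes> x = x \<otimes> z}"

lemma ZK: "z \<in> Z \<Longrightarrow> z \<in> carrier K" by (simp add: Z_def)
lemma Zc: "z \<in> Z \<Longrightarrow> x \<in> carrier K \<Longrightarrow> z \<otimes> x = x \<otimes> z" unfolding Z_def by blast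
lemma ZI: "z \<in> carrier K \<Longrightarrow> (\<And>x. x \<in> carrier K \<Longrightarrow> z \<otimes> x = x \<otimes> z) \<Longrightarrow> z \<in> Z"
  unfolding Z_def by blast

lemma Z_sub: "subgroup Z K"
proof (rule subgroupI)
  show "Z \<subseteq> carrier K" using ZK by blast
  show "Z \<noteq> {}" using ZI[OF one_closed] by auto
next
  fix a assume a: "a \<in> Z"
  note ak = ZK[OF a]
  show "inv a \<in> Z"
  proof (rule ZI)
    show "inv a \<in> carrier K" using ak by simp
    fix x assume x: "x \<in> carrier K"
    have c: "a \<otimes> x = x \<otimes> a" using Zc[OF a x] .
    have "inv a \<otimes> (a \<otimes> x) \<otimes> inv a = inv a \<otimes> (x \<otimes> a) \<otimes> inv a" using c by simp
    thus "inv a \<otimes> x = x \<otimes> inv a"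
      using ak x by (simp add: m_assoc)
  qed
next
  fix a b assume a: "a \<in> Z" and b: "b \<in> Z"
  have ak: "a \<in> carrier K" "b \<in> carrier K" using a b ZK by auto
  show "a \<otimes> b \<in> Z"
  proof (rule ZI)
    show "a \<otimes> b \<in> carrier K" using ak by simp
    fix x assume x: "x \<in> carrier K"
    have "a \<otimes> b \<otimes> x = a \<otimes> (x \<otimes> b)" using Zc[OF b x] ak x by (simp add: m_assoc)
    also have "\<dots> = (a \<otimes> x) \<otimes> b" using x ak by (simp add: m_assoc)
    also have "\<dots> = x \<otimes> (a \<otimes> b)" using Zc[OF a x] x ak by (simp add: m_assoc)
    finally show "a \<otimes> b \<otimes> x = x \<otimes> (a \<otimes> b)" .
  qed
qed

definition "Zg = K\<lparr>carrier := Z\<rparr>"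

lemma Zg_comm: "comm_group Zg"
proof -
  interpret Zg: group Zg unfolding Zg_def by (rule subgroup.subgroup_is_group[OF Z_sub is_group])
  show ?thesis by (rule Zg.group_comm_groupI) (simp add: Zg_def Zc ZK)
qed

lemma Zg_carrier[simp]: "carrier Zg = Z" by (simp add: Zg_def)
lemma Zg_mult[simp]: "monoid.mult Zg = monoid.mult K" by (simp add: Zg_def)
lemma Zg_one[simp]: "monoid.one Zg = monoid.one K" by (simp add: Zg_def)
lemma Zg_pow: "x [^]\<^bsub>Zg\<^esub> (n::nat) = x [^] n"
  unfolding Zg_def by (rule nat_pow_consistent[symmetric])

lemma psi_Z: "a \<in> carrier H \<Longrightarrow> z \<in> Z \<Longrightarrow> phi a z \<in> Z"
proof -
  assume a: "a \<in> carrier H" and z: "z \<in> Z"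
  have "phi a z \<otimes> x = x \<otimes> phi a z" if x: "x \<in> carrier K" for x
  proof -
    define y where "y = inv_into (carrier K) (phi a) x"
    have y: "y \<in> carrier K" "phi a y = x" using a x by (simp_all add: y_def pinv_closed pinv_r)
    have "phi a z \<otimes> phi a y = phi a y \<otimes> phi a z"
      using phi_mult[OF a, of z y] phi_mult[OF a, of y z] Zc[OF z y(1)] ZK[OF z] y by simp
    thus ?thesis using y by simp
  qed
  thus ?thesis using a z ZK by (intro ZI) auto
qed

lemma pow_Z: "z \<in> Z \<Longrightarrow> z [^] (n::nat) \<in> Z"
  by (induct n) (simp_all add: subgroup.one_closed[OF Z_sub] subgroup.m_closed[OF Z_sub])

end



locale frobc = frob +
  assumes cond: "\<forall>h\<in>carrier H. Tf h \<in> Inn K"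
begin

definition "g h = (SOME g. g \<in> carrier K \<and> (\<forall>k\<in>carrier K. \<sigma> (phi h k) = g \<otimes> psi h (\<sigma> k) \<otimes> inv g))"

lemma g_prop: "h \<in> carrier H \<Longrightarrow> g h \<in> carrier K \<and> (\<forall>k\<in>carrier K. \<sigma> (phi h k) = g h \<otimes> psi h (\<sigma> k) \<otimes> inv (g h))"
  unfolding g_def by (rule someI_ex) (use Inn_E cond in blast)

lemma gK[simp]: "h \<in> carrier H \<Longrightarrow> g h \<in> carrier K" using g_prop by blast
lemma gE: "h \<in> carrier H \<Longrightarrow> k \<in> carrier K \<Longrightarrow> \<sigma> (phi h k) = g h \<otimes> psi h (\<sigma> k) \<otimes> inv (g h)"
  using g_prop by blast

lemma psi_comp: "a \<in> carrier H \<Longrightarrow> b \<in> carrier H \<Longrightarrow> x \<in> carrier K \<Longrightarrow> psi (a \<otimes>\<^bsub>H\<^esub> b) x = psi a (psi b x)"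
  by (simp add: gam_hom phi_comp)

definition "f a b = g a \<otimes> psi a (g b) \<otimes> inv (g (a \<otimes>\<^bsub>H\<^esub> b))"

lemma fK[simp]: "a \<in> carrier H \<Longrightarrow> b \<in> carrier H \<Longrightarrow> f a b \<in> carrier K"
  by (simp add: f_def)

lemma fg: "a \<in> carrier H \<Longrightarrow> b \<in> carrier H \<Longrightarrow> f a b \<otimes> g (a \<otimes>\<^bsub>H\<^esub> b) = g a \<otimes> psi a (g b)"
  by (simp add: f_def m_assoc)

lemma key: assumes a: "a \<in> carrier H" and b: "b \<in> carrier H" and k: "k \<in> carrier K"
  shows "\<sigma> (phi (a \<otimes>\<^bsub>H\<^esub> b) k) = (g a \<otimes> psi a (g b)) \<otimes> psi (a \<otimes>\<^bsub>H\<^esub> b) (\<sigma> k) \<otimes> inv (g a \<otimes> psi a (g b))"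
proof -
  have "\<sigma> (phi (a \<otimes>\<^bsub>H\<^esub> b) k) = \<sigma> (phi a (phi b k))" using a b k by (simp add: phi_comp)
  also have "\<dots> = g a \<otimes> psi a (g b \<otimes> psi b (\<sigma> k) \<otimes> inv (g b)) \<otimes> inv (g a)"
    using a b k by (simp add: gE)
  also have "\<dots> = g a \<otimes> (psi a (g b) \<otimes> psi a (psi b (\<sigma> k)) \<otimes> inv (psi a (g b))) \<otimes> inv (g a)"
    using a b k by (simp add: phi_mult phi_inv)
  also have "\<dots> = (g a \<otimes> psi a (g b)) \<otimes> psi (a \<otimes>\<^bsub>H\<^esub> b) (\<sigma> k) \<otimes> inv (g a \<otimes> psi a (g b))"
    using a b k by (simp add: psi_comp m_assoc inv_mult_group)
  finally show ?thesis .
qed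

lemma conj_eq_Z: assumes u: "u \<in> carrier K" and w: "w \<in> carrier K"
  and e: "\<And>x. x \<in> carrier K \<Longrightarrow> u \<otimes> x \<otimes> inv u = w \<otimes> x \<otimes> inv w"
  shows "u \<otimes> inv w \<in> Z"
proof -
  have "u \<otimes> inv w \<otimes> x = x \<otimes> (u \<otimes> inv w)" if x: "x \<in> carrier K" for x
  proof -
    have "u \<otimes> (inv w \<otimes> x \<otimes> w) \<otimes> inv u = w \<otimes> (inv w \<otimes> x \<otimes> w) \<otimes> inv w" using e u w x by simp
    also have "\<dots> = x" using w x by (simp add: m_assoc)
    finally have "u \<otimes> inv w \<otimes> x \<otimes> (w \<otimes> inv u) = x" using u w x by (simp add: m_assoc)
    hence "u \<otimes> inv w \<otimes> x \<otimes> (w \<otimes> inv u) \<otimes> (u \<otimes> inv w) = x \<otimes> (u \<otimes> inv w)" by simp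
    thus ?thesis using u w x by (simp add: m_assoc)
  qed
  thus ?thesis using u w by (intro ZI) auto
qed

lemma fZ: assumes a: "a \<in> carrier H" and b: "b \<in> carrier H" shows "f a b \<in> Z"
  unfolding f_def
proof (rule conj_eq_Z)
  show "g a \<otimes> psi a (g b) \<in> carrier K" using a b by simp
  show "g (a \<otimes>\<^bsub>H\<^esub> b) \<in> carrier K" using a b by simp
  fix x assume x: "x \<in> carrier K"
  define k where "k = inv_into (carrier K) \<sigma> (inv_into (carrier K) (psi (a \<otimes>\<^bsub>H\<^esub> b)) x)"
  have k: "k \<in> carrier K" "psi (a \<otimes>\<^bsub>H\<^esub> b) (\<sigma> k) = x" using a b x
    by (simp_all add: k_def sinv_closed pinv_closed sinv_r pinv_r)
  show "g a \<otimes> psi a (g b) \<otimes> x \<otimes> inv (g a \<otimes> psi a (g b)) = g (a \<otimes>\<^bsub>H\<^esub> b) \<otimes> x \<otimes> inv (g (a \<otimes>\<^bsub>H\<^esub> b))"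
    using key[OF a b k(1)] gE[of "a \<otimes>\<^bsub>H\<^esub> b" k] a b k by simp
qed

lemma cocycle: assumes a: "a \<in> carrier H" and b: "b \<in> carrier H" and c: "c \<in> carrier H"
  shows "psi a (f b c) \<otimes> f a (b \<otimes>\<^bsub>H\<^esub> c) = f a b \<otimes> f (a \<otimes>\<^bsub>H\<^esub> b) c"
proof -
  have Zc': "psi a (f b c) \<otimes> g a = g a \<otimes> psi a (f b c)" using psi_Z[of "\<gamma> a" "f b c"] fZ b c a Zc by simp
  have "psi a (f b c) \<otimes> f a (b \<otimes>\<^bsub>H\<^esub> c) = (psi a (f b c) \<otimes> g a) \<otimes> psi a (g (b \<otimes>\<^bsub>H\<^esub> c)) \<otimes> inv (g (a \<otimes>\<^bsub>H\<^esub> (b \<otimes>\<^bsub>H\<^esub> c)))"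
    using a b c by (simp add: f_def m_assoc)
  also have "\<dots> = g a \<otimes> psi a (f b c \<otimes> g (b \<otimes>\<^bsub>H\<^esub> c)) \<otimes> inv (g (a \<otimes>\<^bsub>H\<^esub> (b \<otimes>\<^bsub>H\<^esub> c)))"
    using a b c by (simp add: Zc' m_assoc phi_mult)
  also have "\<dots> = g a \<otimes> psi a (g b \<otimes> psi b (g c)) \<otimes> inv (g (a \<otimes>\<^bsub>H\<^esub> (b \<otimes>\<^bsub>H\<^esub> c)))"
    using a b c by (simp add: fg)
  also have "\<dots> = f a b \<otimes> f (a \<otimes>\<^bsub>H\<^esub> b) c"
    using a b c by (simp add: f_def m_assoc phi_mult psi_comp H.m_assoc)
  finally show ?thesis .
qed

end



context frobc begin

interpretation Zg: comm_group Zg by (rule Zg_comm)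

definition "F a = finprod Zg (\<lambda>c. f a c) (carrier H)"

lemma f_Pi: "a \<in> carrier H \<Longrightarrow> f a \<in> carrier H \<rightarrow> carrier Zg"
  using fZ by auto

lemma F_Z: "a \<in> carrier H \<Longrightarrow> F a \<in> Z"
  unfolding F_def using Zg.finprod_closed[OF f_Pi] by simp

lemma psi_finprod:
  assumes a: "a \<in> carrier H" and fin: "finite A"
  shows "(\<forall>c\<in>A. u c \<in> Z) \<Longrightarrow> psi a (finprod Zg u A) = finprod Zg (\<lambda>c. psi a (u c)) A"
  using fin
proof (induct A rule: finite_induct)
  case empty
  then show ?case using a by simp
next
  case (insert x A)
  have u: "u \<in> A \<rightarrow> carrier Zg" "u x \<in> carrier Zg" using insert by auto
  have pu: "(\<lambda>c. psi a (u c)) \<in> A \<rightarrow> carrier Zg" "psi a (u x) \<in> carrier Zg"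
    using insert a psi_Z by auto
  have cl: "finprod Zg u A \<in> Z" using Zg.finprod_closed[OF u(1)] by simp
  have "psi a (finprod Zg u (insert x A)) = psi a (u x \<otimes> finprod Zg u A)"
    using Zg.finprod_insert[OF insert(1,2) u] by simp
  also have "\<dots> = psi a (u x) \<otimes> psi a (finprod Zg u A)"
    using a u cl ZK by (simp add: phi_mult)
  also have "\<dots> = psi a (u x) \<otimes> finprod Zg (\<lambda>c. psi a (u c)) A" using insert by simp
  also have "\<dots> = finprod Zg (\<lambda>c. psi a (u c)) (insert x A)"
    using Zg.finprod_insert[OF insert(1,2) pu] by simp
  finally show ?case .
qed

abbreviation "n \<equiv> card (carrier H)"

lemma fpow: assumes a: "a \<in> carrier H" and b: "b \<in> carrier H"
  shows "f a b [^] n \<otimes> F (a \<otimes>\<^bsub>H\<^esub> b) = psi a (F b) \<otimes> F a"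
proof -
  have ab: "a \<otimes>\<^bsub>H\<^esub> b \<in> carrier H" using a b by simp
  have P1: "(\<lambda>c. psi a (f b c)) \<in> carrier H \<rightarrow> carrier Zg" using a b fZ psi_Z by auto
  have P2: "(\<lambda>c. f a (b \<otimes>\<^bsub>H\<^esub> c)) \<in> carrier H \<rightarrow> carrier Zg" using a b fZ by auto
  have P3: "(\<lambda>c. f (a \<otimes>\<^bsub>H\<^esub> b) c) \<in> carrier H \<rightarrow> carrier Zg" using ab fZ by auto
  have P4: "(\<lambda>c. f a b) \<in> carrier H \<rightarrow> carrier Zg" using a b fZ by auto
  have "finprod Zg (\<lambda>c. psi a (f b c) \<otimes>\<^bsub>Zg\<^esub> f a (b \<otimes>\<^bsub>H\<^esub> c)) (carrier H)
      = finprod Zg (\<lambda>c. f a b \<otimes>\<^bsub>Zg\<^esub> f (a \<otimes>\<^bsub>H\<^esub> b) c) (carrier H)"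
  proof (rule Zg.finprod_cong')
    show "(\<lambda>c. f a b \<otimes>\<^bsub>Zg\<^esub> f (a \<otimes>\<^bsub>H\<^esub> b) c) \<in> carrier H \<rightarrow> carrier Zg"
      using P3 P4 subgroup.m_closed[OF Z_sub] by (auto simp: Pi_def)
    fix c assume c: "c \<in> carrier H"
    show "psi a (f b c) \<otimes>\<^bsub>Zg\<^esub> f a (b \<otimes>\<^bsub>H\<^esub> c) = f a b \<otimes>\<^bsub>Zg\<^esub> f (a \<otimes>\<^bsub>H\<^esub> b) c"
      using cocycle[OF a b c] by simp
  qed simp
  moreover have "finprod Zg (\<lambda>c. psi a (f b c) \<otimes>\<^bsub>Zg\<^esub> f a (b \<otimes>\<^bsub>H\<^esub> c)) (carrier H)
      = finprod Zg (\<lambda>c. psi a (f b c)) (carrier H) \<otimes>\<^bsub>Zg\<^esub> finprod Zg (\<lambda>c. f a (b \<otimes>\<^bsub>H\<^esub> c)) (carrier H)"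
    using Zg.finprod_multf[OF P1 P2] .
  moreover have "finprod Zg (\<lambda>c. psi a (f b c)) (carrier H) = psi a (F b)"
    unfolding F_def using psi_finprod[of a "carrier H" "f b"] a b finH fZ by simp
  moreover have "finprod Zg (\<lambda>c. f a (b \<otimes>\<^bsub>H\<^esub> c)) (carrier H) = F a"
  proof -
    have "finprod Zg (f a) ((\<lambda>c. b \<otimes>\<^bsub>H\<^esub> c) ` carrier H) = finprod Zg (\<lambda>c. f a (b \<otimes>\<^bsub>H\<^esub> c)) (carrier H)"
      by (rule Zg.finprod_reindex) (use f_Pi[OF a] H.surj_const_mult[OF b] H.inj_on_cmult[OF b] in auto)
    thus ?thesis using H.surj_const_mult[OF b] by (simp add: F_def)
  qed
  moreover have "finprod Zg (\<lambda>c. f a b \<otimes>\<^bsub>Zg\<^esub> f (a \<otimes>\<^bsub>H\<^esub> b) c) (carrier H)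
      = f a b [^] n \<otimes> F (a \<otimes>\<^bsub>H\<^esub> b)"
    using Zg.finprod_multf[OF P4 P3] Zg.finprod_const[of "f a b" "carrier H"] fZ[OF a b]
    by (simp add: F_def Zg_pow)
  ultimately show ?thesis by simp
qed

definition "q = (card (carrier K) - 1) div n"

lemma nq: "n * q = card (carrier K) - 1"
  using card_dvd by (simp add: q_def)

lemma pow_inv: assumes x: "x \<in> carrier K" shows "x [^] (n * q) = inv x"
proof -
  have cK: "card (carrier K) \<ge> 1" using finK one_closed by (metis card_0_eq empty_iff less_one not_le)
  have "x [^] (n * q) \<otimes> x = x [^] (n * q + 1)" using x by (simp add: nat_pow_mult[symmetric])
  also have "n * q + 1 = order K" using nq cK by (simp add: order_def)
  also have "x [^] order K = \<one>" using pow_order_eq_1[OF x] .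
  finally have "x [^] (n * q) \<otimes> x = \<one>" .
  thus ?thesis using x by (simp add: inv_equality)
qed

definition "z a = F a [^] q"

lemma zZ: "a \<in> carrier H \<Longrightarrow> z a \<in> Z" using pow_Z F_Z by (simp add: z_def)
lemma zK[simp]: "a \<in> carrier H \<Longrightarrow> z a \<in> carrier K" using zZ ZK by blast
lemma FK[simp]: "a \<in> carrier H \<Longrightarrow> F a \<in> carrier K" using F_Z ZK by blast

lemma fz: assumes a: "a \<in> carrier H" and b: "b \<in> carrier H"
  shows "f a b \<otimes> psi a (z b) \<otimes> z a = z (a \<otimes>\<^bsub>H\<^esub> b)"
proof -
  have ab: "a \<otimes>\<^bsub>H\<^esub> b \<in> carrier H" using a b by simp
  define P where "P = psi a (F b)"
  define Q where "Q = F a"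
  define R where "R = inv (F (a \<otimes>\<^bsub>H\<^esub> b))"
  have PZ: "P \<in> Z" using psi_Z F_Z a b by (simp add: P_def)
  have QZ: "Q \<in> Z" using F_Z a by (simp add: Q_def)
  have RZ: "R \<in> Z" using F_Z ab subgroup.m_inv_closed[OF Z_sub] by (simp add: R_def)
  have PK: "P \<in> carrier K" "Q \<in> carrier K" "R \<in> carrier K" using PZ QZ RZ ZK by auto
  have e: "f a b [^] n = P \<otimes> Q \<otimes> R"
    using fpow[OF a b] a b ab by (simp add: P_def Q_def R_def inv_solve_right)
  have "inv (f a b) = (f a b [^] n) [^] q" using pow_inv a b by (simp add: nat_pow_pow)
  also have "\<dots> = (P \<otimes> Q \<otimes> R) [^] q" using e by simp
  also have "\<dots> = (P \<otimes> Q) [^] q \<otimes> R [^] q"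
    using pow_mult_distrib[of "P \<otimes> Q" R q] PK Zc[OF RZ] by simp
  also have "\<dots> = P [^] q \<otimes> Q [^] q \<otimes> R [^] q"
    using pow_mult_distrib[of P Q q] PK Zc[OF QZ] by simp
  also have "\<dots> = psi a (z b) \<otimes> z a \<otimes> inv (z (a \<otimes>\<^bsub>H\<^esub> b))"
  proof -
    have "P [^] q = psi a (z b)"
      unfolding P_def z_def using hom_nat_pow[of "psi a" K K "F b" q] phi_auto[of "\<gamma> a"] a b is_group
      by (simp add: auto_def)
    moreover have "R [^] q = inv (z (a \<otimes>\<^bsub>H\<^esub> b))" unfolding R_def z_def using ab by (simp add: nat_pow_inv)
    ultimately show ?thesis by (simp add: Q_def z_def)
  qed
  finally have "inv (f a b) = psi a (z b) \<otimes> z a \<otimes> inv (z (a \<otimes>\<^bsub>H\<^esub> b))" .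
  hence "f a b \<otimes> (psi a (z b) \<otimes> z a \<otimes> inv (z (a \<otimes>\<^bsub>H\<^esub> b))) = \<one>"
    using a b ab by (metis fK r_inv)
  hence "f a b \<otimes> psi a (z b) \<otimes> z a \<otimes> inv (z (a \<otimes>\<^bsub>H\<^esub> b)) \<otimes> z (a \<otimes>\<^bsub>H\<^esub> b) = z (a \<otimes>\<^bsub>H\<^esub> b)"
    using a b ab by (simp add: m_assoc)
  thus ?thesis using a b ab by (simp add: m_assoc)
qed

definition "c a = z a \<otimes> g a"

lemma cK[simp]: "a \<in> carrier H \<Longrightarrow> c a \<in> carrier K" by (simp add: c_def)

lemma c_cocycle: assumes a: "a \<in> carrier H" and b: "b \<in> carrier H"
  shows "c (a \<otimes>\<^bsub>H\<^esub> b) = c a \<otimes> psi a (c b)"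
proof -
  have ab: "a \<otimes>\<^bsub>H\<^esub> b \<in> carrier H" using a b by simp
  have pz: "psi a (z b) \<in> Z" using psi_Z zZ a b by simp
  have pzK: "psi a (z b) \<in> carrier K" using pz ZK by blast
  have "c a \<otimes> psi a (c b) = z a \<otimes> (g a \<otimes> psi a (z b)) \<otimes> psi a (g b)"
    using a b by (simp add: c_def phi_mult m_assoc)
  also have "\<dots> = z a \<otimes> (psi a (z b) \<otimes> g a) \<otimes> psi a (g b)"
    using Zc[OF pz, of "g a"] a by simp
  also have "\<dots> = (z a \<otimes> psi a (z b)) \<otimes> (f a b \<otimes> g (a \<otimes>\<^bsub>H\<^esub> b))"
    using fg[OF a b] a b pzK by (simp add: m_assoc)
  also have "\<dots> = ((z a \<otimes> psi a (z b)) \<otimes> f a b) \<otimes> g (a \<otimes>\<^bsub>H\<^esub> b)"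
    using a b pzK by (simp add: m_assoc)
  also have "(z a \<otimes> psi a (z b)) \<otimes> f a b = f a b \<otimes> psi a (z b) \<otimes> z a"
  proof -
    have "(z a \<otimes> psi a (z b)) \<otimes> f a b = f a b \<otimes> (z a \<otimes> psi a (z b))"
      using Zc[OF fZ[OF a b], of "z a \<otimes> psi a (z b)"] a b pzK by simp
    also have "\<dots> = f a b \<otimes> (psi a (z b) \<otimes> z a)" using Zc[OF zZ[OF a], of "psi a (z b)"] pzK by simp
    finally show ?thesis using a b pzK by (simp add: m_assoc)
  qed
  also have "f a b \<otimes> psi a (z b) \<otimes> z a = z (a \<otimes>\<^bsub>H\<^esub> b)" by (rule fz[OF a b])
  finally show ?thesis by (simp add: c_def)
qed

lemma cE: assumes h: "h \<in> carrier H" and k: "k \<in> carrier K"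
  shows "\<sigma> (phi h k) = c h \<otimes> psi h (\<sigma> k) \<otimes> inv (c h)"
proof -
  define y where "y = psi h (\<sigma> k)"
  have y: "y \<in> carrier K" using h k by (simp add: y_def)
  have "c h \<otimes> y \<otimes> inv (c h) = z h \<otimes> (g h \<otimes> y \<otimes> inv (g h)) \<otimes> inv (z h)"
    using h y by (simp add: c_def m_assoc inv_mult_group)
  also have "\<dots> = (g h \<otimes> y \<otimes> inv (g h)) \<otimes> z h \<otimes> inv (z h)"
    using Zc[OF zZ[OF h], of "g h \<otimes> y \<otimes> inv (g h)"] h y by simp
  also have "\<dots> = g h \<otimes> y \<otimes> inv (g h)" using h y by (simp add: m_assoc)
  finally show ?thesis using gE[OF h k] by (simp add: y_def)
qed

lemma c_one: "c \<one>\<^bsub>H\<^esub> = \<one>"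
proof -
  have "c \<one>\<^bsub>H\<^esub> \<otimes> \<one> = c \<one>\<^bsub>H\<^esub> \<otimes> c \<one>\<^bsub>H\<^esub>"
    using c_cocycle[of "\<one>\<^bsub>H\<^esub>" "\<one>\<^bsub>H\<^esub>"] by simp
  thus ?thesis using l_cancel[of "c \<one>\<^bsub>H\<^esub>" "\<one>" "c \<one>\<^bsub>H\<^esub>"] by simp
qed

definition "alpha = (\<lambda>(k, h). (\<sigma> k \<otimes> c h, \<gamma> h))"

lemma alpha_hom: "alpha \<in> hom G G"
proof (rule homI)
  fix x assume "x \<in> carrier G" thus "alpha x \<in> carrier G" by (auto simp: alpha_def)
next
  fix x y assume x: "x \<in> carrier G" and y: "y \<in> carrier G"
  obtain k1 h1 where x1: "x = (k1, h1)" "k1 \<in> carrier K" "h1 \<in> carrier H" using x by auto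
  obtain k2 h2 where y1: "y = (k2, h2)" "k2 \<in> carrier K" "h2 \<in> carrier H" using y by auto
  have "\<sigma> (k1 \<otimes> phi h1 k2) \<otimes> c (h1 \<otimes>\<^bsub>H\<^esub> h2) = \<sigma> k1 \<otimes> c h1 \<otimes> psi h1 (\<sigma> k2 \<otimes> c h2)"
    using x1 y1 by (simp add: sig_hom cE c_cocycle phi_mult m_assoc)
  thus "alpha (x \<otimes>\<^bsub>G\<^esub> y) = alpha x \<otimes>\<^bsub>G\<^esub> alpha y"
    using x1 y1 by (simp add: alpha_def gam_hom)
qed

lemma alpha_iso: "alpha \<in> iso G G"
proof -
  have fin: "finite (carrier G)" using finK finH by simp
  have sub: "alpha ` carrier G \<subseteq> carrier G" by (auto simp: alpha_def)
  have inj: "inj_on alpha (carrier G)"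
  proof (rule inj_onI)
    fix x y assume x: "x \<in> carrier G" and y: "y \<in> carrier G" and e: "alpha x = alpha y"
    obtain k1 h1 where x1: "x = (k1, h1)" "k1 \<in> carrier K" "h1 \<in> carrier H" using x by auto
    obtain k2 h2 where y1: "y = (k2, h2)" "k2 \<in> carrier K" "h2 \<in> carrier H" using y by auto
    have "\<gamma> h1 = \<gamma> h2" using e x1 y1 by (simp add: alpha_def)
    hence h: "h1 = h2" using gam_inj x1 y1 by blast
    have "\<sigma> k1 \<otimes> c h1 = \<sigma> k2 \<otimes> c h1" using e x1 y1 h by (simp add: alpha_def)
    hence "\<sigma> k1 = \<sigma> k2" using x1 y1 by simp
    hence "k1 = k2" using sig_inj x1 y1 by blast
    thus "x = y" using h x1 y1 by simp
  qed
  have "bij_betw alpha (carrier G) (carrier G)"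
    using endo_inj_surj[OF fin sub inj] inj by (simp add: bij_betw_def)
  thus ?thesis using alpha_hom by (simp add: iso_def)
qed

lemma alpha_props:
  "(\<forall>k \<in> carrier K. alpha (k, \<one>\<^bsub>H\<^esub>) = (\<sigma> k, \<one>\<^bsub>H\<^esub>)) \<and> (\<forall>h \<in> carrier H. snd (alpha (\<one>, h)) = \<gamma> h)"
  by (simp add: alpha_def c_one)

end

theorem theorem3p3:
  fixes K :: "('a, 'c) monoid_scheme" and H :: "('b, 'd) monoid_scheme"
    and phi :: "'b \<Rightarrow> 'a \<Rightarrow> 'a" and \<sigma> :: "'a \<Rightarrow> 'a" and \<gamma> :: "'b \<Rightarrow> 'b"
  assumes "frobenius_action K H phi"
    and "\<sigma> \<in> iso K K"
    and "\<gamma> \<in> iso H H"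
  shows "(\<exists>\<alpha> \<in> iso (semidirect_prod K H phi) (semidirect_prod K H phi).
            (\<forall>k \<in> carrier K. \<alpha> (k, \<one>\<^bsub>H\<^esub>) = (\<sigma> k, \<one>\<^bsub>H\<^esub>)) \<and>
            (\<forall>h \<in> carrier H. snd (\<alpha> (\<one>\<^bsub>K\<^esub>, h)) = \<gamma> h))
     \<longleftrightarrow>
     (\<forall>h \<in> carrier H.
        (\<lambda>k \<in> carrier K. \<sigma> (phi h (inv_into (carrier K) \<sigma>
                 (inv_into (carrier K) (phi (\<gamma> h)) k)))) \<in> Inn K)"
proof -
  interpret frob K H phi \<sigma> \<gamma> using assms by unfold_locales
  show ?thesis
  proof
    assume "\<exists>\<alpha> \<in> iso (semidirect_prod K H phi) (semidirect_prod K H phi).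
            (\<forall>k \<in> carrier K. \<alpha> (k, \<one>\<^bsub>H\<^esub>) = (\<sigma> k, \<one>\<^bsub>H\<^esub>)) \<and>
            (\<forall>h \<in> carrier H. snd (\<alpha> (\<one>\<^bsub>K\<^esub>, h)) = \<gamma> h)"
    then obtain \<alpha> where i: "\<alpha> \<in> iso (semidirect_prod K H phi) (semidirect_prod K H phi)"
      and p1: "\<forall>k \<in> carrier K. \<alpha> (k, \<one>\<^bsub>H\<^esub>) = (\<sigma> k, \<one>\<^bsub>H\<^esub>)"
      and p2: "\<forall>h \<in> carrier H. snd (\<alpha> (\<one>\<^bsub>K\<^esub>, h)) = \<gamma> h" by blast
    have hm: "\<alpha> \<in> hom (semidirect_prod K H phi) (semidirect_prod K H phi)" using i by (simp add: iso_def)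
    show "\<forall>h \<in> carrier H. (\<lambda>k \<in> carrier K. \<sigma> (phi h (inv_into (carrier K) \<sigma>
                 (inv_into (carrier K) (phi (\<gamma> h)) k)))) \<in> Inn K"
      using forward[OF hm p1 p2] by (simp add: Tf_def)
  next
    assume c: "\<forall>h \<in> carrier H. (\<lambda>k \<in> carrier K. \<sigma> (phi h (inv_into (carrier K) \<sigma>
                 (inv_into (carrier K) (phi (\<gamma> h)) k)))) \<in> Inn K"
    interpret frobc K H phi \<sigma> \<gamma> by unfold_locales (use c in \<open>simp add: Tf_def\<close>)
    show "\<exists>\<alpha> \<in> iso (semidirect_prod K H phi) (semidirect_prod K H phi).
            (\<forall>k \<in> carrier K. \<alpha> (k, \<one>\<^bsub>H\<^esub>) = (\<sigma> k, \<one>\<^bsub>H\<^esub>)) \<and>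
            (\<forall>h \<in> carrier H. snd (\<alpha> (\<one>\<^bsub>K\<^esub>, h)) = \<gamma> h)"
      using alpha_iso alpha_props by blast
  qed
qed

end
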